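(* Let $(C,\chi)$ be a Hopf heap and $x\in C$ a group-like element. Then $\mathrm{H}_x(C)\cong\mathrm{Tn}^r C\cong\mathrm{Tn}^l C$ as bialgebras, via $a\mapsto\tau_x^a$ (with inverse $\tau_a^b\mapsto[x,a,b]$) and $a\mapsto\sigma^a_x$ respectively. Consequently $\mathrm{Tn}^r C$ and $\mathrm{Tn}^l C$ are Hopf algebras.
   Context: Work over a field $\mathbb{F}$; coalgebras coassociative, counital, nonzero, Sweedler notation; $C^{\mathrm{co}}$ co-opposite. A Hopf heap is a coalgebra $C$ with a coalgebra map $\chi:C\otimes C^{\mathrm{co}}\otimes C\to C$, $a\otimes b\otimes c\mapsto[a,b,c]$, with $[[a,b,c],d,e]=[a,b,[c,d,e]]$ and $\sum[c_{(1)},c_{(2)},a]=\sum[a,c_{(1)},c_{(2)}]=\varepsilon(c)a$. An element $x$ is group-like if $\Delta(x)=x\otimes x$, $\varepsilon(x)=1$. $\mathrm{H}_x(C)$ is the Hopf algebra with underlying coalgebra $C$, unit $x$, product $ab=[a,x,b]$ and antipode $S(a)=[x,a,x]$. $\mathrm{Tn}^rC$ is the span of right translations $\tau_a^b:c\mapsto[c,a,b]$, a bialgebra with product $\tau_a^b\tau_c^d=\tau_c^d\circ\tau_a^b=\tau_a^{[b,c,d]}$, unit $\mathrm{id}_C$, coproduct $\Delta(\tau_a^b)=\sum\tau_{a_{(2)}}^{b_{(1)}}\otimes\tau_{a_{(1)}}^{b_{(2)}}$, counit $\varepsilon(\tau_a^b)=\varepsilon(a)\varepsilon(b)$. $\mathrm{Tn}^lC$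 is the span of left translations $\sigma^a_b:c\mapsto[a,b,c]$, a bialgebra with product $\sigma^a_b\sigma^c_d=\sigma^a_b\circ\sigma^c_d=\sigma^{[a,b,c]}_d$, unit $\mathrm{id}_C$, coproduct $\Delta(\sigma^a_b)=\sum\sigma^{a_{(1)}}_{b_{(2)}}\otimes\sigma^{a_{(2)}}_{b_{(1)}}$, counit $\varepsilon(\sigma^a_b)=\varepsilon(a)\varepsilon(b)$. *)

theory Defs
  imports "HOL-Library.Poly_Mapping"
begin

text \<open>
  Every vector space over a field is (up to isomorphism) a free
  vector space on a basis.  We therefore model the underlying vector space of the
  coalgebra C as the space of finitely supported functions from 'b to 'k on a basis
  type 'b (which is nonempty, so C is nonzero).  Tensor products of such spaces are
  the finitely supported functions on the product of the basis types
  (finitely supported functions on 'b \<times> 'b model C \<otimes> C).  The structure maps (coproduct, counit, heap bracket)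
  are given on basis vectors and extended (multi)linearly.
\<close>

type_synonym ('b, 'k) vec = "'b \<Rightarrow>\<^sub>0 'k"

definition bvec :: "'b \<Rightarrow> ('b \<Rightarrow>\<^sub>0 'k::zero_neq_one)" where
  "bvec i = Poly_Mapping.single i 1"

definition smult :: "'k::semiring_0 \<Rightarrow> ('x \<Rightarrow>\<^sub>0 'k) \<Rightarrow> ('x \<Rightarrow>\<^sub>0 'k)" where
  "smult c v = Poly_Mapping.map (\<lambda>t. c * t) v"

definition tens :: "('x \<Rightarrow>\<^sub>0 'k::semiring_0) \<Rightarrow> ('y \<Rightarrow>\<^sub>0 'k) \<Rightarrow> ('x \<times> 'y \<Rightarrow>\<^sub>0 'k)" where
  "tens u v = sum (\<lambda>i. sum (\<lambda>j. Poly_Mapping.single (i, j) (Poly_Mapping.lookup u i * Poly_Mapping.lookup v j)) (Poly_Mapping.keys v)) (Poly_Mapping.keys u)"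

text \<open>Sweedler-type sum: for D = \<Sum> D(i,j) e_i \<otimes> e_j, the value \<Sum> D(i,j) F i j
  (i.e. the linear map C \<otimes> C \<rightarrow> X induced by a map F on basis pairs).\<close>
definition sw2 :: "('b \<times> 'b \<Rightarrow>\<^sub>0 'k::semiring_0) \<Rightarrow> ('b \<Rightarrow> 'b \<Rightarrow> ('x \<Rightarrow>\<^sub>0 'k)) \<Rightarrow> ('x \<Rightarrow>\<^sub>0 'k)" where
  "sw2 D F = (\<Sum>p\<in>Poly_Mapping.keys D. smult (Poly_Mapping.lookup D p) (F (fst p) (snd p)))"

definition cop :: "('b \<Rightarrow> ('b \<times> 'b \<Rightarrow>\<^sub>0 'k::semiring_0)) \<Rightarrow> ('b \<Rightarrow>\<^sub>0 'k) \<Rightarrow> ('b \<times> 'b \<Rightarrow>\<^sub>0 'k)" where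
  "cop \<Delta> v = (\<Sum>i\<in>Poly_Mapping.keys v. smult (Poly_Mapping.lookup v i) (\<Delta> i))"

definition cou :: "('b \<Rightarrow> 'k::semiring_0) \<Rightarrow> ('b \<Rightarrow>\<^sub>0 'k) \<Rightarrow> 'k" where
  "cou \<epsilon> v = (\<Sum>i\<in>Poly_Mapping.keys v. Poly_Mapping.lookup v i * \<epsilon> i)"

definition br :: "('b \<Rightarrow> 'b \<Rightarrow> 'b \<Rightarrow> ('b \<Rightarrow>\<^sub>0 'k::semiring_0))
    \<Rightarrow> ('b \<Rightarrow>\<^sub>0 'k) \<Rightarrow> ('b \<Rightarrow>\<^sub>0 'k) \<Rightarrow> ('b \<Rightarrow>\<^sub>0 'k) \<Rightarrow> ('b \<Rightarrow>\<^sub>0 'k)" where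
  "br \<chi> a b c = (\<Sum>i\<in>Poly_Mapping.keys a. \<Sum>j\<in>Poly_Mapping.keys b. \<Sum>k\<in>Poly_Mapping.keys c.
      smult (Poly_Mapping.lookup a i * Poly_Mapping.lookup b j * Poly_Mapping.lookup c k) (\<chi> i j k))"

definition coalgebra :: "('b \<Rightarrow> ('b \<times> 'b \<Rightarrow>\<^sub>0 'k::field)) \<Rightarrow> ('b \<Rightarrow> 'k) \<Rightarrow> bool" where
  "coalgebra \<Delta> \<epsilon> \<longleftrightarrow>
     (\<forall>i. sw2 (\<Delta> i) (\<lambda>j k. sw2 (\<Delta> j) (\<lambda>p q. Poly_Mapping.single (p, q, k) (1::'k)))
        = sw2 (\<Delta> i) (\<lambda>j k. sw2 (\<Delta> k) (\<lambda>p q. Poly_Mapping.single (j, p, q) 1))) \<and>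
     (\<forall>i. sw2 (\<Delta> i) (\<lambda>j k. smult (\<epsilon> j) (bvec k)) = bvec i) \<and>
     (\<forall>i. sw2 (\<Delta> i) (\<lambda>j k. smult (\<epsilon> k) (bvec j)) = bvec i)"

text \<open>Hopf heap: \<chi> : C \<otimes> C^co \<otimes> C \<rightarrow> C is a coalgebra map, associativity, herd laws.\<close>
definition hopf_heap :: "('b \<Rightarrow> ('b \<times> 'b \<Rightarrow>\<^sub>0 'k::field)) \<Rightarrow> ('b \<Rightarrow> 'k)
    \<Rightarrow> ('b \<Rightarrow> 'b \<Rightarrow> 'b \<Rightarrow> ('b \<Rightarrow>\<^sub>0 'k)) \<Rightarrow> bool" where
  "hopf_heap \<Delta> \<epsilon> \<chi> \<longleftrightarrow> coalgebra \<Delta> \<epsilon> \<and>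
     (\<forall>i j k. cop \<Delta> (\<chi> i j k) =
        sw2 (\<Delta> i) (\<lambda>i1 i2. sw2 (\<Delta> j) (\<lambda>j1 j2. sw2 (\<Delta> k) (\<lambda>k1 k2.
          tens (\<chi> i1 j2 k1) (\<chi> i2 j1 k2))))) \<and>
     (\<forall>i j k. cou \<epsilon> (\<chi> i j k) = \<epsilon> i * \<epsilon> j * \<epsilon> k) \<and>
     (\<forall>i j k l m. br \<chi> (\<chi> i j k) (bvec l) (bvec m) = br \<chi> (bvec i) (bvec j) (\<chi> k l m)) \<and>
     (\<forall>c a. sw2 (\<Delta> c) (\<lambda>p q. \<chi> p q a) = smult (\<epsilon> c) (bvec a)) \<and>
     (\<forall>c a. sw2 (\<Delta> c) (\<lambda>p q. \<chi> a p q) = smult (\<epsilon> c) (bvec a))"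

definition group_like :: "('b \<Rightarrow> ('b \<times> 'b \<Rightarrow>\<^sub>0 'k::field)) \<Rightarrow> ('b \<Rightarrow> 'k) \<Rightarrow> ('b \<Rightarrow>\<^sub>0 'k) \<Rightarrow> bool" where
  "group_like \<Delta> \<epsilon> x \<longleftrightarrow> cop \<Delta> x = tens x x \<and> cou \<epsilon> x = 1"

definition rtr :: "('b \<Rightarrow> 'b \<Rightarrow> 'b \<Rightarrow> ('b \<Rightarrow>\<^sub>0 'k::field)) \<Rightarrow> ('b \<Rightarrow>\<^sub>0 'k) \<Rightarrow> ('b \<Rightarrow>\<^sub>0 'k)
    \<Rightarrow> (('b \<Rightarrow>\<^sub>0 'k) \<Rightarrow> ('b \<Rightarrow>\<^sub>0 'k))" where
  "rtr \<chi> a b = (\<lambda>c. br \<chi> c a b)"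

definition ltr :: "('b \<Rightarrow> 'b \<Rightarrow> 'b \<Rightarrow> ('b \<Rightarrow>\<^sub>0 'k::field)) \<Rightarrow> ('b \<Rightarrow>\<^sub>0 'k) \<Rightarrow> ('b \<Rightarrow>\<^sub>0 'k)
    \<Rightarrow> (('b \<Rightarrow>\<^sub>0 'k) \<Rightarrow> ('b \<Rightarrow>\<^sub>0 'k))" where
  "ltr \<chi> a b = (\<lambda>c. br \<chi> a b c)"

definition rcomb :: "('b \<Rightarrow> 'b \<Rightarrow> 'b \<Rightarrow> ('b \<Rightarrow>\<^sub>0 'k::field)) \<Rightarrow> ('k \<times> ('b \<Rightarrow>\<^sub>0 'k) \<times> ('b \<Rightarrow>\<^sub>0 'k)) list
    \<Rightarrow> (('b \<Rightarrow>\<^sub>0 'k) \<Rightarrow> ('b \<Rightarrow>\<^sub>0 'k))" where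
  "rcomb \<chi> ps = (\<lambda>c. sum_list (map (\<lambda>(l, a, b). smult l (rtr \<chi> a b c)) ps))"

definition lcomb :: "('b \<Rightarrow> 'b \<Rightarrow> 'b \<Rightarrow> ('b \<Rightarrow>\<^sub>0 'k::field)) \<Rightarrow> ('k \<times> ('b \<Rightarrow>\<^sub>0 'k) \<times> ('b \<Rightarrow>\<^sub>0 'k)) list
    \<Rightarrow> (('b \<Rightarrow>\<^sub>0 'k) \<Rightarrow> ('b \<Rightarrow>\<^sub>0 'k))" where
  "lcomb \<chi> ps = (\<lambda>c. sum_list (map (\<lambda>(l, a, b). smult l (ltr \<chi> a b c)) ps))"

definition TnR :: "('b \<Rightarrow> 'b \<Rightarrow> 'b \<Rightarrow> ('b \<Rightarrow>\<^sub>0 'k::field)) \<Rightarrow> (('b \<Rightarrow>\<^sub>0 'k) \<Rightarrow> ('b \<Rightarrow>\<^sub>0 'k)) set" where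
  "TnR \<chi> = {f. \<exists>ps. f = rcomb \<chi> ps}"

definition TnL :: "('b \<Rightarrow> 'b \<Rightarrow> 'b \<Rightarrow> ('b \<Rightarrow>\<^sub>0 'k::field)) \<Rightarrow> (('b \<Rightarrow>\<^sub>0 'k) \<Rightarrow> ('b \<Rightarrow>\<^sub>0 'k)) set" where
  "TnL \<chi> = {f. \<exists>ps. f = lcomb \<chi> ps}"

text \<open>An element of End(C) \<otimes> End(C) is represented
  (injectively) by the operator it induces on C \<otimes> C; we record its value on the
  basis tensor e_c \<otimes> e_d.\<close>
definition rcoprod :: "('b \<Rightarrow> ('b \<times> 'b \<Rightarrow>\<^sub>0 'k::field)) \<Rightarrow> ('b \<Rightarrow> 'b \<Rightarrow> 'b \<Rightarrow> ('b \<Rightarrow>\<^sub>0 'k))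
    \<Rightarrow> ('k \<times> ('b \<Rightarrow>\<^sub>0 'k) \<times> ('b \<Rightarrow>\<^sub>0 'k)) list \<Rightarrow> 'b \<Rightarrow> 'b \<Rightarrow> ('b \<times> 'b \<Rightarrow>\<^sub>0 'k)" where
  "rcoprod \<Delta> \<chi> ps c d = sum_list (map (\<lambda>(l, a, b). smult l
      (sw2 (cop \<Delta> a) (\<lambda>a1 a2. sw2 (cop \<Delta> b) (\<lambda>b1 b2.
         tens (rtr \<chi> (bvec a2) (bvec b1) (bvec c)) (rtr \<chi> (bvec a1) (bvec b2) (bvec d)))))) ps)"

definition lcoprod :: "('b \<Rightarrow> ('b \<times> 'b \<Rightarrow>\<^sub>0 'k::field)) \<Rightarrow> ('b \<Rightarrow> 'b \<Rightarrow> 'b \<Rightarrow> ('b \<Rightarrow>\<^sub>0 'k))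
    \<Rightarrow> ('k \<times> ('b \<Rightarrow>\<^sub>0 'k) \<times> ('b \<Rightarrow>\<^sub>0 'k)) list \<Rightarrow> 'b \<Rightarrow> 'b \<Rightarrow> ('b \<times> 'b \<Rightarrow>\<^sub>0 'k)" where
  "lcoprod \<Delta> \<chi> ps c d = sum_list (map (\<lambda>(l, a, b). smult l
      (sw2 (cop \<Delta> a) (\<lambda>a1 a2. sw2 (cop \<Delta> b) (\<lambda>b1 b2.
         tens (ltr \<chi> (bvec a1) (bvec b2) (bvec c)) (ltr \<chi> (bvec a2) (bvec b1) (bvec d)))))) ps)"

definition tcounit :: "('b \<Rightarrow> 'k::field) \<Rightarrow> ('k \<times> ('b \<Rightarrow>\<^sub>0 'k) \<times> ('b \<Rightarrow>\<^sub>0 'k)) list \<Rightarrow> 'k" where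
  "tcounit \<epsilon> ps = sum_list (map (\<lambda>(l, a, b). l * cou \<epsilon> a * cou \<epsilon> b) ps)"

definition op_linear_on :: "(('b \<Rightarrow>\<^sub>0 'k::field) \<Rightarrow> ('b \<Rightarrow>\<^sub>0 'k)) set
    \<Rightarrow> ((('b \<Rightarrow>\<^sub>0 'k) \<Rightarrow> ('b \<Rightarrow>\<^sub>0 'k)) \<Rightarrow> (('b \<Rightarrow>\<^sub>0 'k) \<Rightarrow> ('b \<Rightarrow>\<^sub>0 'k))) \<Rightarrow> bool" where
  "op_linear_on T S \<longleftrightarrow>
     (\<forall>f\<in>T. \<forall>g\<in>T. S (\<lambda>c. f c + g c) = (\<lambda>c. S f c + S g c)) \<and>
     (\<forall>f\<in>T. \<forall>l. S (\<lambda>c. smult l (f c)) = (\<lambda>c. smult l (S f c)))"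

end

theory Submission
  imports Defs
begin


abbreviation lk where "lk \<equiv> Poly_Mapping.lookup"
abbreviation ks where "ks \<equiv> Poly_Mapping.keys"

lemma lookup_smult[simp]: "lk (smult c v) i = c * lk v i"
  by (simp add: smult_def Poly_Mapping.map.rep_eq when_def)

lemma smult_add_right: "smult (c::'k::field) (u + v) = smult c u + smult c v"
  by (rule poly_mapping_eqI) (simp add: lookup_add distrib_left)
lemma smult_add_left: "smult ((c::'k::field) + d) v = smult c v + smult d v"
  by (rule poly_mapping_eqI) (simp add: lookup_add distrib_right)
lemma smult_smult[simp]: "smult (c::'k::field) (smult d v) = smult (c*d) v"
  by (rule poly_mapping_eqI) (simp add: mult.assoc)
lemma smult_one[simp]: "smult (1::'k::field) v = v"
  by (rule poly_mapping_eqI) simp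
lemma smult_zero_left[simp]: "smult (0::'k::field) v = 0"
  by (rule poly_mapping_eqI) simp
lemma smult_zero_right[simp]: "smult (c::'k::field) 0 = 0"
  by (rule poly_mapping_eqI) simp
lemma smult_sum: "smult (c::'k::field) (sum f A) = (\<Sum>a\<in>A. smult c (f a))"
  by (rule poly_mapping_eqI) (simp add: lookup_sum sum_distrib_left)
lemma smult_single: "smult (c::'k::field) (Poly_Mapping.single i d) = Poly_Mapping.single i (c*d)"
  by (rule poly_mapping_eqI) (simp add: lookup_single when_def)
lemma keys_smult: "ks (smult (c::'k::field) v) \<subseteq> ks v"
  by (auto simp: in_keys_iff)

definition linf :: "('a \<Rightarrow> ('x \<Rightarrow>\<^sub>0 'k::field)) \<Rightarrow> ('a \<Rightarrow>\<^sub>0 'k) \<Rightarrow> ('x \<Rightarrow>\<^sub>0 'k)" where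
  "linf F v = (\<Sum>i\<in>ks v. smult (lk v i) (F i))"

lemma linf_superset: "finite S \<Longrightarrow> ks v \<subseteq> S \<Longrightarrow> linf F v = (\<Sum>i\<in>S. smult (lk v i) (F i))"
  unfolding linf_def
  by (rule sum.mono_neutral_left) (auto simp: in_keys_iff)

lemma linf_add: "linf F (u + v) = linf F u + linf F v"
proof -
  let ?S = "ks u \<union> ks v"
  have f: "finite ?S" by simp
  have "ks (u+v) \<subseteq> ?S" by (rule keys_add)
  then show ?thesis
    using linf_superset[OF f, of "u+v" F] linf_superset[OF f, of u F] linf_superset[OF f, of v F]
    by (simp add: lookup_add smult_add_left sum.distrib)
qed

lemma linf_smult: "linf F (smult c v) = smult c (linf F v)"
  using linf_superset[of "ks v" "smult c v" F] keys_smult[of c v]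
  by (simp add: linf_def smult_sum)

lemma linf_zero[simp]: "linf F 0 = 0"
  by (simp add: linf_def)

lemma linf_single: "linf F (Poly_Mapping.single i c) = smult c (F i)"
  using linf_superset[of "{i}" "Poly_Mapping.single i c" F]
  by simp

lemma linf_bvec[simp]: "linf F (bvec i) = F i"
  by (simp add: bvec_def linf_single)

lemma linf_fadd: "linf (\<lambda>i. F i + G i) v = linf F v + linf G v"
  by (simp add: linf_def smult_add_right sum.distrib)

lemma linf_fsmult: "linf (\<lambda>i. smult c (F i)) v = smult c (linf F v)"
  by (simp add: linf_def smult_sum mult.commute)

lemma linf_cong: "(\<And>i. i \<in> ks v \<Longrightarrow> F i = G i) \<Longrightarrow> linf F v = linf G v"
  by (simp add: linf_def)

lemma linf_repr: "linf bvec v = v"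
proof (rule poly_mapping_eqI)
  fix k
  show "lk (linf bvec v) k = lk v k"
  proof -
    have e: "\<And>x. lk v x * (if x = k then 1 else 0) = (if x = k then lk v x else 0)" by simp
    show ?thesis
      by (simp add: linf_def lookup_sum bvec_def lookup_single when_def e sum.delta' in_keys_iff)
  qed
qed

definition lin :: "(('a \<Rightarrow>\<^sub>0 'k::field) \<Rightarrow> ('x \<Rightarrow>\<^sub>0 'k)) \<Rightarrow> bool" where
  "lin L \<longleftrightarrow> (\<forall>u v. L (u+v) = L u + L v) \<and> (\<forall>c v. L (smult c v) = smult c (L v))"

lemma linI: "(\<And>u v. L (u+v) = L u + L v) \<Longrightarrow> (\<And>c v. L (smult c v) = smult c (L v)) \<Longrightarrow> lin L"
  by (simp add: lin_def)

lemma lin_add: "lin L \<Longrightarrow> L (u+v) = L u + L v" by (simp add: lin_def)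
lemma lin_smult: "lin L \<Longrightarrow> L (smult c v) = smult c (L v)" by (simp add: lin_def)
lemma lin_zero: "lin L \<Longrightarrow> L 0 = 0"
  using lin_smult[of L 0 0] by simp

lemma lin_sum: "lin L \<Longrightarrow> L (sum f A) = (\<Sum>a\<in>A. L (f a))"
proof (induction A rule: infinite_finite_induct)
  case (infinite A) then show ?case by (simp add: lin_zero)
next
  case empty then show ?case by (simp add: lin_zero)
next
  case (insert x F) then show ?case by (simp add: lin_add)
qed

lemma lin_linf: "lin L \<Longrightarrow> L (linf F v) = linf (\<lambda>i. L (F i)) v"
  by (simp add: linf_def lin_sum lin_smult)

lemma lin_repr: "lin L \<Longrightarrow> L v = linf (\<lambda>i. L (bvec i)) v"
  using lin_linf[of L bvec v] by (simp add: linf_repr)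

lemma lin_ext: "lin L \<Longrightarrow> lin M \<Longrightarrow> (\<And>i. L (bvec i) = M (bvec i)) \<Longrightarrow> L v = M v"
  using lin_repr[of L v] lin_repr[of M v] by simp

lemma lin_linf_arg: "lin (linf F)"
  by (rule linI) (simp_all add: linf_add linf_smult)

lemma lin_id: "lin (\<lambda>v. v)"
  by (rule linI) simp_all

lemma lin_linf_fun: "(\<And>i. lin (G i)) \<Longrightarrow> lin (\<lambda>v. linf (\<lambda>i. G i v) w)"
  by (rule linI) (simp_all add: lin_add lin_smult linf_fadd linf_fsmult)

lemma lin_comp: "lin f \<Longrightarrow> lin g \<Longrightarrow> lin (\<lambda>v. f (g v))"
  by (rule linI) (simp_all add: lin_add lin_smult)

definition slin :: "(('a \<Rightarrow>\<^sub>0 'k::field) \<Rightarrow> 'k) \<Rightarrow> bool" where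
  "slin L \<longleftrightarrow> (\<forall>u v. L (u+v) = L u + L v) \<and> (\<forall>c v. L (smult c v) = c * L v)"

lemma slin_lin: "slin L \<Longrightarrow> lin (\<lambda>v. Poly_Mapping.single () (L v))"
  by (rule linI) (simp_all add: slin_def single_add smult_single)

lemma slin_ext: "slin L \<Longrightarrow> slin M \<Longrightarrow> (\<And>i. L (bvec i) = M (bvec i)) \<Longrightarrow> L v = M v"
  using lin_ext[OF slin_lin slin_lin, of L M v]
  by (metis lookup_single_eq)

lemma slin_comp: "slin f \<Longrightarrow> lin g \<Longrightarrow> slin (\<lambda>v. f (g v))"
  by (simp add: slin_def lin_add lin_smult)

lemma slin_mult: "slin f \<Longrightarrow> slin (\<lambda>v. f v * c)"
  by (simp add: slin_def distrib_right)
lemma slin_mult': "slin f \<Longrightarrow> slin (\<lambda>v. c * f v)"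
  by (simp add: slin_def distrib_left mult.left_commute)

lemma cou_alt: "cou \<epsilon> v = lk (linf (\<lambda>i. Poly_Mapping.single () (\<epsilon> i)) v) ()"
  by (simp add: cou_def linf_def lookup_sum)

lemma slin_cou: "slin (cou \<epsilon>)"
  unfolding slin_def cou_alt by (simp add: linf_add linf_smult lookup_add)

lemma cou_bvec[simp]: "cou \<epsilon> (bvec i) = (\<epsilon> i::'k::field)"
  by (simp add: cou_alt)

lemma lin_smult_scalar: "slin f \<Longrightarrow> lin (\<lambda>v. smult (f v) a)"
  by (rule linI) (simp_all add: slin_def smult_add_left)

lemma lin_smult_vec: "lin (\<lambda>v. smult c v)"
  by (rule linI) (simp_all add: smult_add_right mult.commute)

lemma cop_linf: "cop \<Delta> v = linf \<Delta> v" by (simp add: cop_def linf_def)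
lemma sw2_linf: "sw2 D F = linf (\<lambda>p. F (fst p) (snd p)) D" by (simp add: sw2_def linf_def)
lemma br_linf: "br \<chi> a b c = linf (\<lambda>i. linf (\<lambda>j. linf (\<lambda>k. \<chi> i j k) c) b) a"
  by (simp add: br_def linf_def smult_sum mult.assoc)
lemma tens_linf: "tens u v = linf (\<lambda>i. linf (\<lambda>j. bvec (i,j)) v) u"
  by (simp add: tens_def linf_def smult_sum bvec_def smult_single)

lemma br_bvec[simp]: "br \<chi> (bvec i) (bvec j) (bvec k) = (\<chi> i j k :: _ \<Rightarrow>\<^sub>0 'k::field)"
  by (simp add: br_linf)
lemma cop_bvec[simp]: "cop \<Delta> (bvec i) = (\<Delta> i :: _ \<Rightarrow>\<^sub>0 'k::field)"
  by (simp add: cop_linf)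

lemma lin_br1: "lin (\<lambda>a. br \<chi> a b c)"
  unfolding br_linf by (rule lin_linf_arg)
lemma lin_br2: "lin (\<lambda>b. br \<chi> a b c)"
  unfolding br_linf by (intro lin_linf_fun lin_linf_arg)
lemma lin_br3: "lin (\<lambda>c. br \<chi> a b c)"
  unfolding br_linf by (intro lin_linf_fun lin_linf_arg)
lemma lin_tens1: "lin (\<lambda>u. tens u v)"
  unfolding tens_linf by (rule lin_linf_arg)
lemma lin_tens2: "lin (\<lambda>v. tens u v)"
  unfolding tens_linf by (intro lin_linf_fun lin_linf_arg)
lemma lin_cop: "lin (cop \<Delta>)"
  unfolding cop_linf by (rule lin_linf_arg)
lemma lin_sw2_D: "lin (\<lambda>D. sw2 D F)"
  unfolding sw2_linf by (rule lin_linf_arg)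
lemma lin_sw2_F: "(\<And>p q. lin (F p q)) \<Longrightarrow> lin (\<lambda>v. sw2 D (\<lambda>p q. F p q v))"
  unfolding sw2_linf by (intro lin_linf_fun) auto

lemma lin_br1': "lin g \<Longrightarrow> lin (\<lambda>v. br \<chi> (g v) b c)"
  using lin_comp[OF lin_br1 ] by blast
lemma lin_br2': "lin g \<Longrightarrow> lin (\<lambda>v. br \<chi> a (g v) c)"
  using lin_comp[OF lin_br2 ] by blast
lemma lin_br3': "lin g \<Longrightarrow> lin (\<lambda>v. br \<chi> a b (g v))"
  using lin_comp[OF lin_br3 ] by blast
lemma lin_tens1': "lin g \<Longrightarrow> lin (\<lambda>v. tens (g v) b)"
  using lin_comp[OF lin_tens1 ] by blast
lemma lin_tens2': "lin g \<Longrightarrow> lin (\<lambda>v. tens a (g v))"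
  using lin_comp[OF lin_tens2 ] by blast
lemma lin_cop': "lin g \<Longrightarrow> lin (\<lambda>v. cop \<Delta> (g v))"
  using lin_comp[OF lin_cop ] by blast
lemma lin_sw2_D': "lin g \<Longrightarrow> lin (\<lambda>v. sw2 (g v) F)"
  using lin_comp[OF lin_sw2_D ] by blast

lemmas lin_intros = lin_id lin_br1' lin_br2' lin_br3' lin_tens1' lin_tens2' lin_cop' lin_sw2_D' lin_sw2_F
   lin_smult_vec

lemma sw2_push: "lin L \<Longrightarrow> L (sw2 D F) = sw2 D (\<lambda>p q. L (F p q))"
  unfolding sw2_linf by (simp add: lin_linf)

lemma sw2_tens: "sw2 (tens u v) H = linf (\<lambda>i. linf (\<lambda>j. H i j) v) u"
  unfolding sw2_linf tens_linf
  by (simp add: lin_linf[OF lin_linf_arg])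

lemma BIL:
  assumes "\<And>v. lin (\<lambda>u. G u v)" "\<And>u. lin (\<lambda>v. G u v)"
  shows "sw2 (tens u v) (\<lambda>p q. G (bvec p) (bvec q)) = G u v"
proof -
  have "G u v = linf (\<lambda>i. G (bvec i) v) u" by (rule lin_repr[OF assms(1)])
  also have "\<dots> = linf (\<lambda>i. linf (\<lambda>j. G (bvec i) (bvec j)) v) u"
    by (subst lin_repr[OF assms(2)]) rule
  finally show ?thesis by (simp add: sw2_tens)
qed



context
  fixes \<Delta> :: "'b \<Rightarrow> ('b \<times> 'b \<Rightarrow>\<^sub>0 'k::field)" and \<epsilon> :: "'b \<Rightarrow> 'k"
    and \<chi> :: "'b \<Rightarrow> 'b \<Rightarrow> 'b \<Rightarrow> ('b \<Rightarrow>\<^sub>0 'k)"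
  assumes HH: "hopf_heap \<Delta> \<epsilon> \<chi>"
begin

lemma V_assoc: "br \<chi> (br \<chi> a b c) d e = br \<chi> a b (br \<chi> c d e)"
proof -
  have s1: "br \<chi> (br \<chi> (bvec i) (bvec j) (bvec k)) (bvec l) (bvec m) = br \<chi> (bvec i) (bvec j) (br \<chi> (bvec k) (bvec l) (bvec m))" for i j k l m
    using HH by (simp add: hopf_heap_def)
  have s2: "br \<chi> (br \<chi> (bvec i) (bvec j) (bvec k)) (bvec l) e = br \<chi> (bvec i) (bvec j) (br \<chi> (bvec k) (bvec l) e)" (is "?L e = ?R e") for i j k l e
    by (rule lin_ext[of ?L ?R]) (auto intro!: lin_intros simp: s1[simplified])
  have s3: "br \<chi> (br \<chi> (bvec i) (bvec j) (bvec k)) d e = br \<chi> (bvec i) (bvec j) (br \<chi> (bvec k) d e)" (is "?L d = ?R d") for i j k d e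
    by (rule lin_ext[of ?L ?R]) (auto intro!: lin_intros simp: s2[simplified])
  have s4: "br \<chi> (br \<chi> (bvec i) (bvec j) c) d e = br \<chi> (bvec i) (bvec j) (br \<chi> c d e)" (is "?L c = ?R c") for i j c d e
    by (rule lin_ext[of ?L ?R]) (auto intro!: lin_intros simp: s3[simplified])
  have s5: "br \<chi> (br \<chi> (bvec i) b c) d e = br \<chi> (bvec i) b (br \<chi> c d e)" (is "?L b = ?R b") for i b c d e
    by (rule lin_ext[of ?L ?R]) (auto intro!: lin_intros simp: s4[simplified])
  show ?thesis (is "?L a = ?R a")
    by (rule lin_ext[of ?L ?R]) (auto intro!: lin_intros simp: s5[simplified])
qed

lemma V_herd1: "sw2 (cop \<Delta> c) (\<lambda>p q. br \<chi> (bvec p) (bvec q) a) = smult (cou \<epsilon> c) a"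
proof -
  have s1: "sw2 (\<Delta> i) (\<lambda>p q. br \<chi> (bvec p) (bvec q) (bvec k)) = smult (\<epsilon> i) (bvec k)" for i k
    using HH by (simp add: hopf_heap_def)
  have s2: "sw2 (\<Delta> i) (\<lambda>p q. br \<chi> (bvec p) (bvec q) a) = smult (\<epsilon> i) a" (is "?L a = ?R a") for i a
    by (rule lin_ext[of ?L ?R]) (auto intro!: lin_intros simp: s1[simplified])
  show ?thesis (is "?L c = ?R c")
    by (rule lin_ext[of ?L ?R]) (auto intro!: lin_intros lin_smult_scalar slin_cou simp: s2[simplified])
qed

lemma V_herd2: "sw2 (cop \<Delta> c) (\<lambda>p q. br \<chi> a (bvec p) (bvec q)) = smult (cou \<epsilon> c) a"
proof -
  have s1: "sw2 (\<Delta> i) (\<lambda>p q. br \<chi> (bvec k) (bvec p) (bvec q)) = smult (\<epsilon> i) (bvec k)" for i k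
    using HH by (simp add: hopf_heap_def)
  have s2: "sw2 (\<Delta> i) (\<lambda>p q. br \<chi> a (bvec p) (bvec q)) = smult (\<epsilon> i) a" (is "?L a = ?R a") for i a
    by (rule lin_ext[of ?L ?R]) (auto intro!: lin_intros simp: s1[simplified])
  show ?thesis (is "?L c = ?R c")
    by (rule lin_ext[of ?L ?R]) (auto intro!: lin_intros lin_smult_scalar slin_cou simp: s2[simplified])
qed

lemma V_cou: "cou \<epsilon> (br \<chi> a b c) = cou \<epsilon> a * cou \<epsilon> b * cou \<epsilon> c"
proof -
  have s1: "cou \<epsilon> (br \<chi> (bvec i) (bvec j) (bvec k)) = cou \<epsilon> (bvec i) * cou \<epsilon> (bvec j) * cou \<epsilon> (bvec k)" for i j k
    using HH by (simp add: hopf_heap_def)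
  have s2: "cou \<epsilon> (br \<chi> (bvec i) (bvec j) c) = cou \<epsilon> (bvec i) * cou \<epsilon> (bvec j) * cou \<epsilon> c" (is "?L c = ?R c") for i j c
    by (rule slin_ext[of ?L ?R]) (auto intro!: slin_comp[OF slin_cou] lin_intros slin_mult' slin_cou simp: s1[simplified])
  have s3: "cou \<epsilon> (br \<chi> (bvec i) b c) = cou \<epsilon> (bvec i) * cou \<epsilon> b * cou \<epsilon> c" (is "?L b = ?R b") for i b c
    by (rule slin_ext[of ?L ?R]) (auto intro!: slin_comp[OF slin_cou] lin_intros slin_mult' slin_mult slin_cou simp: s2[simplified])
  show ?thesis (is "?L a = ?R a")
    by (rule slin_ext[of ?L ?R]) (auto intro!: slin_comp[OF slin_cou] lin_intros slin_mult slin_cou simp: s3[simplified])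
qed

lemma V_comap: "cop \<Delta> (br \<chi> u v w) = sw2 (cop \<Delta> u) (\<lambda>u1 u2. sw2 (cop \<Delta> v) (\<lambda>v1 v2. sw2 (cop \<Delta> w) (\<lambda>w1 w2.
          tens (br \<chi> (bvec u1) (bvec v2) (bvec w1)) (br \<chi> (bvec u2) (bvec v1) (bvec w2)))))"
proof -
  have s1: "cop \<Delta> (br \<chi> (bvec i) (bvec j) (bvec k)) = sw2 (cop \<Delta> (bvec i)) (\<lambda>u1 u2. sw2 (cop \<Delta> (bvec j)) (\<lambda>v1 v2. sw2 (cop \<Delta> (bvec k)) (\<lambda>w1 w2.
          tens (br \<chi> (bvec u1) (bvec v2) (bvec w1)) (br \<chi> (bvec u2) (bvec v1) (bvec w2)))))" for i j k
    using HH by (simp add: hopf_heap_def)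
  have s2: "cop \<Delta> (br \<chi> (bvec i) (bvec j) w) = sw2 (cop \<Delta> (bvec i)) (\<lambda>u1 u2. sw2 (cop \<Delta> (bvec j)) (\<lambda>v1 v2. sw2 (cop \<Delta> w) (\<lambda>w1 w2.
          tens (br \<chi> (bvec u1) (bvec v2) (bvec w1)) (br \<chi> (bvec u2) (bvec v1) (bvec w2)))))" (is "?L w = ?R w") for i j w
    by (rule lin_ext[of ?L ?R]) (auto intro!: lin_intros simp del: cop_bvec simp: s1[simplified])
  have s3: "cop \<Delta> (br \<chi> (bvec i) v w) = sw2 (cop \<Delta> (bvec i)) (\<lambda>u1 u2. sw2 (cop \<Delta> v) (\<lambda>v1 v2. sw2 (cop \<Delta> w) (\<lambda>w1 w2.
          tens (br \<chi> (bvec u1) (bvec v2) (bvec w1)) (br \<chi> (bvec u2) (bvec v1) (bvec w2)))))" (is "?L v = ?R v") for i v w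
    by (rule lin_ext[of ?L ?R]) (auto intro!: lin_intros simp del: cop_bvec simp: s2[simplified])
  show ?thesis (is "?L u = ?R u")
    by (rule lin_ext[of ?L ?R]) (auto intro!: lin_intros simp del: cop_bvec simp: s3[simplified])
qed

end


lemma sw2_sw2: "sw2 (sw2 D F) G = sw2 D (\<lambda>p q. sw2 (F p q) G :: _ \<Rightarrow>\<^sub>0 'k::field)"
  by (rule sw2_push[OF lin_sw2_D])

lemma sw2_tens_tens: "lin f \<Longrightarrow> lin g \<Longrightarrow>
   sw2 (tens P Q) (\<lambda>i j. tens (f (bvec i)) (g (bvec j))) = tens (f P) (g Q)"
  by (rule BIL[where G="\<lambda>u v. tens (f u) (g v)"]) (auto intro!: lin_intros)

lemma lin_suml: "lin L \<Longrightarrow> L (sum_list (map (\<lambda>(l,a,b). smult l (g a b)) ps))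
   = sum_list (map (\<lambda>(l,a,b). smult l (L (g a b))) ps)"
proof (induction ps)
  case Nil then show ?case by (simp add: lin_zero)
next
  case (Cons p ps)
  obtain l a b where "p = (l,a,b)" by (cases p)
  with Cons show ?case by (simp add: lin_add lin_smult)
qed

lemma suml_cong: "(\<And>l a b. (l,a,b) \<in> set ps \<Longrightarrow> f a b = g a b) \<Longrightarrow>
   sum_list (map (\<lambda>(l,a,b). smult l (f a b)) ps) = sum_list (map (\<lambda>(l,a,b). smult l (g a b)) ps)"
proof (induction ps)
  case Nil then show ?case by simp
next
  case (Cons p ps)
  obtain l a b where p: "p = (l,a,b)" by (cases p)
  have "f a b = g a b" using Cons.prems p by (metis list.set_intros(1))
  moreover have "sum_list (map (\<lambda>(l,a,b). smult l (f a b)) ps) = sum_list (map (\<lambda>(l,a,b). smult l (g a b)) ps)"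
    by (rule Cons.IH) (metis Cons.prems list.set_intros(2))
  ultimately show ?case using p by simp
qed

context
  fixes \<Delta> :: "'b \<Rightarrow> ('b \<times> 'b \<Rightarrow>\<^sub>0 'k::field)" and \<epsilon> :: "'b \<Rightarrow> 'k"
    and \<chi> :: "'b \<Rightarrow> 'b \<Rightarrow> 'b \<Rightarrow> ('b \<Rightarrow>\<^sub>0 'k)" and x :: "'b \<Rightarrow>\<^sub>0 'k"
  assumes HH: "hopf_heap \<Delta> \<epsilon> \<chi>" and GL: "group_like \<Delta> \<epsilon> x"
begin

lemma copx: "cop \<Delta> x = tens x x" using GL by (simp add: group_like_def)
lemma coux: "cou \<epsilon> x = 1" using GL by (simp add: group_like_def)

lemma D1: "br \<chi> a x x = a"
proof -
  have "br \<chi> a x x = sw2 (tens x x) (\<lambda>p q. br \<chi> a (bvec p) (bvec q))"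
    by (rule BIL[where G="\<lambda>u v. br \<chi> a u v", symmetric]) (auto intro!: lin_intros)
  also have "\<dots> = a" using V_herd2[OF HH, of x a] by (simp add: copx coux)
  finally show ?thesis .
qed

lemma D2: "br \<chi> x x a = a"
proof -
  have "br \<chi> x x a = sw2 (tens x x) (\<lambda>p q. br \<chi> (bvec p) (bvec q) a)"
    by (rule BIL[where G="\<lambda>u v. br \<chi> u v a", symmetric]) (auto intro!: lin_intros)
  also have "\<dots> = a" using V_herd1[OF HH, of x a] by (simp add: copx coux)
  finally show ?thesis .
qed

lemma D3: "cop \<Delta> (br \<chi> x v w) = sw2 (cop \<Delta> v) (\<lambda>v1 v2. sw2 (cop \<Delta> w) (\<lambda>w1 w2.
          tens (br \<chi> x (bvec v2) (bvec w1)) (br \<chi> x (bvec v1) (bvec w2))))"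
proof -
  have "cop \<Delta> (br \<chi> x v w) = sw2 (tens x x) (\<lambda>p q. (\<lambda>u1 u2. sw2 (cop \<Delta> v) (\<lambda>v1 v2. sw2 (cop \<Delta> w) (\<lambda>w1 w2.
          tens (br \<chi> u1 (bvec v2) (bvec w1)) (br \<chi> u2 (bvec v1) (bvec w2))))) (bvec p) (bvec q))"
    using V_comap[OF HH, of x v w] by (simp add: copx)
  also have "\<dots> = sw2 (cop \<Delta> v) (\<lambda>v1 v2. sw2 (cop \<Delta> w) (\<lambda>w1 w2.
          tens (br \<chi> x (bvec v2) (bvec w1)) (br \<chi> x (bvec v1) (bvec w2))))"
    by (rule BIL) (auto intro!: lin_intros)
  finally show ?thesis .
qed

lemma D3': "cop \<Delta> (br \<chi> u v x) = sw2 (cop \<Delta> u) (\<lambda>u1 u2. sw2 (cop \<Delta> v) (\<lambda>v1 v2.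
          tens (br \<chi> (bvec u1) (bvec v2) x) (br \<chi> (bvec u2) (bvec v1) x)))"
proof -
  have e: "sw2 (tens x x) (\<lambda>w1 w2. tens (br \<chi> (bvec u1) (bvec v2) (bvec w1)) (br \<chi> (bvec u2) (bvec v1) (bvec w2)))
     = tens (br \<chi> (bvec u1) (bvec v2) x) (br \<chi> (bvec u2) (bvec v1) x)" for u1 u2 v1 v2
    by (rule sw2_tens_tens) (auto intro!: lin_intros)
  show ?thesis using V_comap[OF HH, of u v x] by (simp add: copx e del: br_bvec)
qed

lemma K0: "br \<chi> c x (br \<chi> x p q) = br \<chi> c p q"
  by (metis V_assoc[OF HH] D1)
lemma K0': "br \<chi> (br \<chi> p q x) x c = br \<chi> p q c"
  by (metis V_assoc[OF HH] D2)

lemma cou_brx: "cou \<epsilon> (br \<chi> x a b) = cou \<epsilon> a * cou \<epsilon> b"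
  by (simp add: V_cou[OF HH] coux)
lemma cou_brx': "cou \<epsilon> (br \<chi> a b x) = cou \<epsilon> a * cou \<epsilon> b"
  by (simp add: V_cou[OF HH] coux)

end


definition Ar where "Ar \<chi> x ps = sum_list (map (\<lambda>(l,a,b). smult l (br \<chi> x a b)) ps)"
definition Al where "Al \<chi> x ps = sum_list (map (\<lambda>(l,a,b). smult l (br \<chi> a b x)) ps)"

context
  fixes \<Delta> :: "'b \<Rightarrow> ('b \<times> 'b \<Rightarrow>\<^sub>0 'k::field)" and \<epsilon> :: "'b \<Rightarrow> 'k"
    and \<chi> :: "'b \<Rightarrow> 'b \<Rightarrow> 'b \<Rightarrow> ('b \<Rightarrow>\<^sub>0 'k)" and x :: "'b \<Rightarrow>\<^sub>0 'k"
  assumes HH: "hopf_heap \<Delta> \<epsilon> \<chi>" and GL: "group_like \<Delta> \<epsilon> x"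
begin

lemmas as = V_assoc[OF HH]
lemmas d1 = D1[OF HH GL] and d2 = D2[OF HH GL] and d3 = D3[OF HH GL] and d3' = D3'[OF HH GL]

lemma K0g: "br \<chi> c x (br \<chi> x m y) = br \<chi> c m y"
  by (metis as d1)

lemmas nrm = as d1 d2 K0g

lemma K1: "br \<chi> (br \<chi> c x (br \<chi> x m x)) p q = br \<chi> c m (br \<chi> x p q)"
  by (simp only: nrm)
lemma K2: "br \<chi> (br \<chi> c p q) x (br \<chi> x m x) = br \<chi> c x (br \<chi> (br \<chi> x p q) m x)"
  by (simp only: nrm)
lemma K3: "br \<chi> (br \<chi> x m x) x (br \<chi> p q c) = br \<chi> (br \<chi> x m (br \<chi> p q x)) x c"
  by (simp only: nrm)
lemma K4: "br \<chi> p q (br \<chi> (br \<chi> x n x) x c) = br \<chi> (br \<chi> (br \<chi> p q x) n x) x c"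
  by (simp only: nrm)

lemma rcomb_eq: "rcomb \<chi> ps = rtr \<chi> x (Ar \<chi> x ps)"
proof (rule ext)
  fix c
  have "rtr \<chi> x (Ar \<chi> x ps) c = sum_list (map (\<lambda>(l,a,b). smult l (br \<chi> c x (br \<chi> x a b))) ps)"
    by (simp add: rtr_def Ar_def lin_suml[OF lin_br3])
  also have "\<dots> = rcomb \<chi> ps c"
    by (simp add: rcomb_def rtr_def K0g)
  finally show "rcomb \<chi> ps c = rtr \<chi> x (Ar \<chi> x ps) c" ..
qed

lemma lcomb_eq: "lcomb \<chi> ps = ltr \<chi> (Al \<chi> x ps) x"
proof (rule ext)
  fix c
  have "ltr \<chi> (Al \<chi> x ps) x c = sum_list (map (\<lambda>(l,a,b). smult l (br \<chi> (br \<chi> a b x) x c)) ps)"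
    by (simp add: ltr_def Al_def lin_suml[OF lin_br1])
  also have "\<dots> = lcomb \<chi> ps c"
    by (simp add: lcomb_def ltr_def as d2)
  finally show "lcomb \<chi> ps c = ltr \<chi> (Al \<chi> x ps) x c" ..
qed

lemma injR: "inj (\<lambda>a. rtr \<chi> x a)"
  by (rule injI) (metis rtr_def d2)

lemma injL: "inj (\<lambda>a. ltr \<chi> a x)"
  by (rule injI) (metis ltr_def d1)

lemma rangeR: "range (\<lambda>a. rtr \<chi> x a) = TnR \<chi>"
proof
  show "range (\<lambda>a. rtr \<chi> x a) \<subseteq> TnR \<chi>"
  proof
    fix f assume "f \<in> range (\<lambda>a. rtr \<chi> x a)"
    then obtain a where f: "f = rtr \<chi> x a" by auto
    have "f = rcomb \<chi> [(1, x, a)]" by (rule ext) (simp add: f rcomb_def rtr_def)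
    then show "f \<in> TnR \<chi>" by (auto simp: TnR_def)
  qed
  show "TnR \<chi> \<subseteq> range (\<lambda>a. rtr \<chi> x a)"
    by (auto simp: TnR_def rcomb_eq)
qed

lemma rangeL: "range (\<lambda>a. ltr \<chi> a x) = TnL \<chi>"
proof
  show "range (\<lambda>a. ltr \<chi> a x) \<subseteq> TnL \<chi>"
  proof
    fix f assume "f \<in> range (\<lambda>a. ltr \<chi> a x)"
    then obtain a where f: "f = ltr \<chi> a x" by auto
    have "f = lcomb \<chi> [(1, a, x)]" by (rule ext) (simp add: f lcomb_def ltr_def)
    then show "f \<in> TnL \<chi>" by (auto simp: TnL_def)
  qed
  show "TnL \<chi> \<subseteq> range (\<lambda>a. ltr \<chi> a x)"
    by (auto simp: TnL_def lcomb_eq)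
qed

lemma cou_sum: "cou \<epsilon> (sum_list (map (\<lambda>(l,a,b). smult l (g a b)) ps)) = sum_list (map (\<lambda>(l,a,b). l * cou \<epsilon> (g a b)) ps)"
proof (induction ps)
  case Nil then show ?case using slin_cou[of \<epsilon>] by (simp add: cou_def)
next
  case (Cons p ps)
  obtain l a b where "p = (l,a,b)" by (cases p)
  with Cons show ?case using slin_cou[of \<epsilon>] by (simp add: slin_def)
qed

lemma tcR: "tcounit \<epsilon> ps = cou \<epsilon> (Ar \<chi> x ps)"
  by (simp add: tcounit_def Ar_def cou_sum cou_brx[OF HH GL] mult.assoc)
lemma tcL: "tcounit \<epsilon> ps = cou \<epsilon> (Al \<chi> x ps)"
  by (simp add: tcounit_def Al_def cou_sum cou_brx'[OF HH GL] mult.assoc)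

lemma PR: "sw2 (cop \<Delta> (br \<chi> x a b)) (\<lambda>i j. tens (rtr \<chi> x (bvec i) (bvec c)) (rtr \<chi> x (bvec j) (bvec d)))
  = sw2 (cop \<Delta> a) (\<lambda>a1 a2. sw2 (cop \<Delta> b) (\<lambda>b1 b2.
         tens (rtr \<chi> (bvec a2) (bvec b1) (bvec c)) (rtr \<chi> (bvec a1) (bvec b2) (bvec d))))"
proof -
  have e: "sw2 (tens P Q) (\<lambda>i j. tens (br \<chi> (bvec c) x (bvec i)) (br \<chi> (bvec d) x (bvec j)))
     = tens (br \<chi> (bvec c) x P) (br \<chi> (bvec d) x Q)" for P Q
    by (rule sw2_tens_tens[where f="\<lambda>v. br \<chi> (bvec c) x v" and g="\<lambda>v. br \<chi> (bvec d) x v"])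
       (intro lin_intros)+
  show ?thesis by (simp add: rtr_def d3 sw2_sw2 e K0g del: br_bvec)
qed

lemma PL: "sw2 (cop \<Delta> (br \<chi> a b x)) (\<lambda>i j. tens (ltr \<chi> (bvec i) x (bvec c)) (ltr \<chi> (bvec j) x (bvec d)))
  = sw2 (cop \<Delta> a) (\<lambda>a1 a2. sw2 (cop \<Delta> b) (\<lambda>b1 b2.
         tens (ltr \<chi> (bvec a1) (bvec b2) (bvec c)) (ltr \<chi> (bvec a2) (bvec b1) (bvec d))))"
proof -
  have e: "sw2 (tens P Q) (\<lambda>i j. tens (br \<chi> (bvec i) x (bvec c)) (br \<chi> (bvec j) x (bvec d)))
     = tens (br \<chi> P x (bvec c)) (br \<chi> Q x (bvec d))" for P Q
    by (rule sw2_tens_tens[where f="\<lambda>v. br \<chi> v x (bvec c)" and g="\<lambda>v. br \<chi> v x (bvec d)"])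
       (intro lin_intros)+
  show ?thesis by (simp add: ltr_def d3' sw2_sw2 e as d2 del: br_bvec)
qed

lemma coprodR: "rcomb \<chi> ps = rtr \<chi> x a \<Longrightarrow> rcoprod \<Delta> \<chi> ps c d =
            sw2 (cop \<Delta> a) (\<lambda>i j. tens (rtr \<chi> x (bvec i) (bvec c)) (rtr \<chi> x (bvec j) (bvec d)))"
proof -
  assume h: "rcomb \<chi> ps = rtr \<chi> x a"
  have a: "a = Ar \<chi> x ps" using h rcomb_eq injR by (metis injD)
  show ?thesis
    unfolding a Ar_def
    by (simp add: lin_suml[OF lin_sw2_D'[OF lin_cop]] PR rcoprod_def del: br_bvec)
qed

lemma coprodL: "lcomb \<chi> ps = ltr \<chi> a x \<Longrightarrow> lcoprod \<Delta> \<chi> ps c d =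
            sw2 (cop \<Delta> a) (\<lambda>i j. tens (ltr \<chi> (bvec i) x (bvec c)) (ltr \<chi> (bvec j) x (bvec d)))"
proof -
  assume h: "lcomb \<chi> ps = ltr \<chi> a x"
  have a: "a = Al \<chi> x ps" using h lcomb_eq injL by (metis injD)
  show ?thesis
    unfolding a Al_def
    by (simp add: lin_suml[OF lin_sw2_D'[OF lin_cop]] PL lcoprod_def del: br_bvec)
qed


lemma bil_br23: "sw2 (tens P Q) (\<lambda>p q. br \<chi> c (bvec p) (bvec q)) = br \<chi> c P Q"
  by (rule BIL[where G="\<lambda>u v. br \<chi> c u v"]) (auto intro!: lin_intros)

lemma SR1: "sw2 (cop \<Delta> a) (\<lambda>a1 a2. sw2 (cop \<Delta> b) (\<lambda>b1 b2.
             rtr \<chi> (bvec a1) (bvec b2) ((\<lambda>f. rtr \<chi> x (br \<chi> x (f x) x)) (rtr \<chi> (bvec a2) (bvec b1)) c)))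
           = smult (cou \<epsilon> a * cou \<epsilon> b) c"
proof -
  have "sw2 (cop \<Delta> (br \<chi> x a b)) (\<lambda>p q. br \<chi> c (bvec p) (bvec q)) = smult (cou \<epsilon> a * cou \<epsilon> b) c"
    by (simp add: V_herd2[OF HH] cou_brx[OF HH GL])
  moreover have "sw2 (cop \<Delta> (br \<chi> x a b)) (\<lambda>p q. br \<chi> c (bvec p) (bvec q)) =
     sw2 (cop \<Delta> a) (\<lambda>a1 a2. sw2 (cop \<Delta> b) (\<lambda>b1 b2. br \<chi> c (br \<chi> x (bvec a2) (bvec b1)) (br \<chi> x (bvec a1) (bvec b2))))"
    by (simp add: d3 sw2_sw2 bil_br23 del: br_bvec)
  moreover have "(\<lambda>a1 a2. sw2 (cop \<Delta> b) (\<lambda>b1 b2.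
             rtr \<chi> (bvec a1) (bvec b2) ((\<lambda>f. rtr \<chi> x (br \<chi> x (f x) x)) (rtr \<chi> (bvec a2) (bvec b1)) c)))
     = (\<lambda>a1 a2. sw2 (cop \<Delta> b) (\<lambda>b1 b2. br \<chi> c (br \<chi> x (bvec a2) (bvec b1)) (br \<chi> x (bvec a1) (bvec b2))))"
    by (simp add: rtr_def K1 del: br_bvec)
  ultimately show ?thesis by simp
qed

lemma SR2: "sw2 (cop \<Delta> a) (\<lambda>a1 a2. sw2 (cop \<Delta> b) (\<lambda>b1 b2.
             (\<lambda>f. rtr \<chi> x (br \<chi> x (f x) x)) (rtr \<chi> (bvec a1) (bvec b2)) (rtr \<chi> (bvec a2) (bvec b1) c)))
           = smult (cou \<epsilon> a * cou \<epsilon> b) c"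
proof -
  have e: "sw2 (tens P Q) (\<lambda>p q. br \<chi> c x (br \<chi> (bvec p) (bvec q) x)) = br \<chi> c x (br \<chi> P Q x)" for P Q
    by (rule BIL[where G="\<lambda>u v. br \<chi> c x (br \<chi> u v x)"]) (auto intro!: lin_intros)
  have "sw2 (cop \<Delta> (br \<chi> x a b)) (\<lambda>p q. br \<chi> c x (br \<chi> (bvec p) (bvec q) x))
     = br \<chi> c x (sw2 (cop \<Delta> (br \<chi> x a b)) (\<lambda>p q. br \<chi> (bvec p) (bvec q) x))"
    by (rule sw2_push[symmetric]) (intro lin_intros)
  also have "\<dots> = smult (cou \<epsilon> a * cou \<epsilon> b) c"
    by (simp add: V_herd1[OF HH] cou_brx[OF HH GL] lin_smult[OF lin_br3] d1 del: br_bvec)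
  finally have 1: "sw2 (cop \<Delta> (br \<chi> x a b)) (\<lambda>p q. br \<chi> c x (br \<chi> (bvec p) (bvec q) x)) = smult (cou \<epsilon> a * cou \<epsilon> b) c" .
  moreover have "sw2 (cop \<Delta> (br \<chi> x a b)) (\<lambda>p q. br \<chi> c x (br \<chi> (bvec p) (bvec q) x)) =
     sw2 (cop \<Delta> a) (\<lambda>a1 a2. sw2 (cop \<Delta> b) (\<lambda>b1 b2. br \<chi> c x (br \<chi> (br \<chi> x (bvec a2) (bvec b1)) (br \<chi> x (bvec a1) (bvec b2)) x)))"
    by (simp add: d3 sw2_sw2 e del: br_bvec)
  moreover have "(\<lambda>a1 a2. sw2 (cop \<Delta> b) (\<lambda>b1 b2.
             (\<lambda>f. rtr \<chi> x (br \<chi> x (f x) x)) (rtr \<chi> (bvec a1) (bvec b2)) (rtr \<chi> (bvec a2) (bvec b1) c)))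
     = (\<lambda>a1 a2. sw2 (cop \<Delta> b) (\<lambda>b1 b2. br \<chi> c x (br \<chi> (br \<chi> x (bvec a2) (bvec b1)) (br \<chi> x (bvec a1) (bvec b2)) x)))"
    by (simp add: rtr_def K2 del: br_bvec)
  ultimately show ?thesis by simp
qed

lemma SL1: "sw2 (cop \<Delta> a) (\<lambda>a1 a2. sw2 (cop \<Delta> b) (\<lambda>b1 b2.
             (\<lambda>f. ltr \<chi> (br \<chi> x (f x) x) x) (ltr \<chi> (bvec a1) (bvec b2)) (ltr \<chi> (bvec a2) (bvec b1) c)))
           = smult (cou \<epsilon> a * cou \<epsilon> b) c"
proof -
  have e: "sw2 (tens P Q) (\<lambda>p q. br \<chi> (br \<chi> x (bvec p) (bvec q)) x c) = br \<chi> (br \<chi> x P Q) x c" for P Q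
    by (rule BIL[where G="\<lambda>u v. br \<chi> (br \<chi> x u v) x c"]) (auto intro!: lin_intros)
  have "sw2 (cop \<Delta> (br \<chi> a b x)) (\<lambda>p q. br \<chi> (br \<chi> x (bvec p) (bvec q)) x c)
     = br \<chi> (sw2 (cop \<Delta> (br \<chi> a b x)) (\<lambda>p q. br \<chi> x (bvec p) (bvec q))) x c"
    by (rule sw2_push[symmetric]) (intro lin_intros)
  also have "\<dots> = smult (cou \<epsilon> a * cou \<epsilon> b) c"
    by (simp add: V_herd2[OF HH] cou_brx'[OF HH GL] lin_smult[OF lin_br1] d2 del: br_bvec)
  finally have 1: "sw2 (cop \<Delta> (br \<chi> a b x)) (\<lambda>p q. br \<chi> (br \<chi> x (bvec p) (bvec q)) x c) = smult (cou \<epsilon> a * cou \<epsilon> b) c" .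
  moreover have "sw2 (cop \<Delta> (br \<chi> a b x)) (\<lambda>p q. br \<chi> (br \<chi> x (bvec p) (bvec q)) x c) =
     sw2 (cop \<Delta> a) (\<lambda>a1 a2. sw2 (cop \<Delta> b) (\<lambda>b1 b2. br \<chi> (br \<chi> x (br \<chi> (bvec a1) (bvec b2) x) (br \<chi> (bvec a2) (bvec b1) x)) x c))"
    by (simp add: d3' sw2_sw2 e del: br_bvec)
  moreover have "(\<lambda>a1 a2. sw2 (cop \<Delta> b) (\<lambda>b1 b2.
             (\<lambda>f. ltr \<chi> (br \<chi> x (f x) x) x) (ltr \<chi> (bvec a1) (bvec b2)) (ltr \<chi> (bvec a2) (bvec b1) c)))
     = (\<lambda>a1 a2. sw2 (cop \<Delta> b) (\<lambda>b1 b2. br \<chi> (br \<chi> x (br \<chi> (bvec a1) (bvec b2) x) (br \<chi> (bvec a2) (bvec b1) x)) x c))"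
    by (simp add: ltr_def K3 del: br_bvec)
  ultimately show ?thesis by simp
qed

lemma SL2: "sw2 (cop \<Delta> a) (\<lambda>a1 a2. sw2 (cop \<Delta> b) (\<lambda>b1 b2.
             ltr \<chi> (bvec a1) (bvec b2) ((\<lambda>f. ltr \<chi> (br \<chi> x (f x) x) x) (ltr \<chi> (bvec a2) (bvec b1)) c)))
           = smult (cou \<epsilon> a * cou \<epsilon> b) c"
proof -
  have e: "sw2 (tens P Q) (\<lambda>p q. br \<chi> (br \<chi> (bvec p) (bvec q) x) x c) = br \<chi> (br \<chi> P Q x) x c" for P Q
    by (rule BIL[where G="\<lambda>u v. br \<chi> (br \<chi> u v x) x c"]) (auto intro!: lin_intros)
  have "sw2 (cop \<Delta> (br \<chi> a b x)) (\<lambda>p q. br \<chi> (br \<chi> (bvec p) (bvec q) x) x c)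
     = br \<chi> (sw2 (cop \<Delta> (br \<chi> a b x)) (\<lambda>p q. br \<chi> (bvec p) (bvec q) x)) x c"
    by (rule sw2_push[symmetric]) (intro lin_intros)
  also have "\<dots> = smult (cou \<epsilon> a * cou \<epsilon> b) c"
    by (simp add: V_herd1[OF HH] cou_brx'[OF HH GL] lin_smult[OF lin_br1] d2 del: br_bvec)
  finally have 1: "sw2 (cop \<Delta> (br \<chi> a b x)) (\<lambda>p q. br \<chi> (br \<chi> (bvec p) (bvec q) x) x c) = smult (cou \<epsilon> a * cou \<epsilon> b) c" .
  moreover have "sw2 (cop \<Delta> (br \<chi> a b x)) (\<lambda>p q. br \<chi> (br \<chi> (bvec p) (bvec q) x) x c) =
     sw2 (cop \<Delta> a) (\<lambda>a1 a2. sw2 (cop \<Delta> b) (\<lambda>b1 b2. br \<chi> (br \<chi> (br \<chi> (bvec a1) (bvec b2) x) (br \<chi> (bvec a2) (bvec b1) x) x) x c))"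
    by (simp add: d3' sw2_sw2 e del: br_bvec)
  moreover have "(\<lambda>a1 a2. sw2 (cop \<Delta> b) (\<lambda>b1 b2.
             ltr \<chi> (bvec a1) (bvec b2) ((\<lambda>f. ltr \<chi> (br \<chi> x (f x) x) x) (ltr \<chi> (bvec a2) (bvec b1)) c)))
     = (\<lambda>a1 a2. sw2 (cop \<Delta> b) (\<lambda>b1 b2. br \<chi> (br \<chi> (br \<chi> (bvec a1) (bvec b2) x) (br \<chi> (bvec a2) (bvec b1) x) x) x c))"
    by (simp add: ltr_def K4 del: br_bvec)
  ultimately show ?thesis by simp
qed

lemma linR: "op_linear_on (TnR \<chi>) (\<lambda>f. rtr \<chi> x (br \<chi> x (f x) x))"
  unfolding op_linear_on_def
  by (auto simp: rtr_def lin_add[OF lin_br2] lin_add[OF lin_br3] lin_smult[OF lin_br2] lin_smult[OF lin_br3])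

lemma linL: "op_linear_on (TnL \<chi>) (\<lambda>f. ltr \<chi> (br \<chi> x (f x) x) x)"
  unfolding op_linear_on_def
  by (auto simp: ltr_def lin_add[OF lin_br2] lin_add[OF lin_br1] lin_smult[OF lin_br2] lin_smult[OF lin_br1])

end

theorem mainTheorem5:
  fixes \<Delta> :: "'b \<Rightarrow> ('b \<times> 'b \<Rightarrow>\<^sub>0 'k::field)"
    and \<epsilon> :: "'b \<Rightarrow> 'k"
    and \<chi> :: "'b \<Rightarrow> 'b \<Rightarrow> 'b \<Rightarrow> ('b \<Rightarrow>\<^sub>0 'k)"
    and x :: "'b \<Rightarrow>\<^sub>0 'k"
  assumes "hopf_heap \<Delta> \<epsilon> \<chi>" and "group_like \<Delta> \<epsilon> x"
  shows
    \<comment> \<open>H_x(C) \<cong> Tn^r C via a \<mapsto> \<tau>_x^a, with inverse \<tau>_a^b \<mapsto> [x,a,b]\<close>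
    "inj (\<lambda>a. rtr \<chi> x a) \<and> range (\<lambda>a. rtr \<chi> x a) = TnR \<chi> \<and>
     (\<forall>a b. rtr \<chi> x (br \<chi> x a b) = rtr \<chi> a b) \<and>
     (\<forall>a b. rtr \<chi> x (br \<chi> a x b) = rtr \<chi> x b \<circ> rtr \<chi> x a) \<and>
     rtr \<chi> x x = id \<and>
     (\<forall>a ps. rcomb \<chi> ps = rtr \<chi> x a \<longrightarrow>
        (\<forall>c d. rcoprod \<Delta> \<chi> ps c d =
            sw2 (cop \<Delta> a) (\<lambda>i j. tens (rtr \<chi> x (bvec i) (bvec c)) (rtr \<chi> x (bvec j) (bvec d)))) \<and>
        tcounit \<epsilon> ps = cou \<epsilon> a) \<and>
    \<comment> \<open>H_x(C) \<cong> Tn^l C via a \<mapsto> \<sigma>^a_x\<close>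
     inj (\<lambda>a. ltr \<chi> a x) \<and> range (\<lambda>a. ltr \<chi> a x) = TnL \<chi> \<and>
     (\<forall>a b. ltr \<chi> (br \<chi> a x b) x = ltr \<chi> a x \<circ> ltr \<chi> b x) \<and>
     ltr \<chi> x x = id \<and>
     (\<forall>a ps. lcomb \<chi> ps = ltr \<chi> a x \<longrightarrow>
        (\<forall>c d. lcoprod \<Delta> \<chi> ps c d =
            sw2 (cop \<Delta> a) (\<lambda>i j. tens (ltr \<chi> (bvec i) x (bvec c)) (ltr \<chi> (bvec j) x (bvec d)))) \<and>
        tcounit \<epsilon> ps = cou \<epsilon> a) \<and>
    \<comment> \<open>Tn^r C is a Hopf algebra (product f g = g \<circ> f): it has an antipode\<close>
     (\<exists>S. (\<forall>f\<in>TnR \<chi>. S f \<in> TnR \<chi>) \<and> op_linear_on (TnR \<chi>) S \<and>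
        (\<forall>a b c. sw2 (cop \<Delta> a) (\<lambda>a1 a2. sw2 (cop \<Delta> b) (\<lambda>b1 b2.
             rtr \<chi> (bvec a1) (bvec b2) (S (rtr \<chi> (bvec a2) (bvec b1)) c)))
           = smult (cou \<epsilon> a * cou \<epsilon> b) c) \<and>
        (\<forall>a b c. sw2 (cop \<Delta> a) (\<lambda>a1 a2. sw2 (cop \<Delta> b) (\<lambda>b1 b2.
             S (rtr \<chi> (bvec a1) (bvec b2)) (rtr \<chi> (bvec a2) (bvec b1) c)))
           = smult (cou \<epsilon> a * cou \<epsilon> b) c)) \<and>
    \<comment> \<open>Tn^l C is a Hopf algebra (product = composition): it has an antipode\<close>
     (\<exists>S. (\<forall>f\<in>TnL \<chi>. S f \<in> TnL \<chi>) \<and> op_linear_on (TnL \<chi>) S \<and>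
        (\<forall>a b c. sw2 (cop \<Delta> a) (\<lambda>a1 a2. sw2 (cop \<Delta> b) (\<lambda>b1 b2.
             S (ltr \<chi> (bvec a1) (bvec b2)) (ltr \<chi> (bvec a2) (bvec b1) c)))
           = smult (cou \<epsilon> a * cou \<epsilon> b) c) \<and>
        (\<forall>a b c. sw2 (cop \<Delta> a) (\<lambda>a1 a2. sw2 (cop \<Delta> b) (\<lambda>b1 b2.
             ltr \<chi> (bvec a1) (bvec b2) (S (ltr \<chi> (bvec a2) (bvec b1)) c)))
           = smult (cou \<epsilon> a * cou \<epsilon> b) c))"
proof -
  note HH = assms(1) and GL = assms(2)
  have A1: "\<forall>a ps. rcomb \<chi> ps = rtr \<chi> x a \<longrightarrow>
        (\<forall>c d. rcoprod \<Delta> \<chi> ps c d =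
            sw2 (cop \<Delta> a) (\<lambda>i j. tens (rtr \<chi> x (bvec i) (bvec c)) (rtr \<chi> x (bvec j) (bvec d)))) \<and>
        tcounit \<epsilon> ps = cou \<epsilon> a"
  proof (intro allI impI conjI)
    fix a ps c d assume h: "rcomb \<chi> ps = rtr \<chi> x a"
    show "rcoprod \<Delta> \<chi> ps c d =
            sw2 (cop \<Delta> a) (\<lambda>i j. tens (rtr \<chi> x (bvec i) (bvec c)) (rtr \<chi> x (bvec j) (bvec d)))"
      by (rule coprodR[OF HH GL h])
    have "a = Ar \<chi> x ps" using h rcomb_eq[OF HH GL] injR[OF HH GL] by (metis injD)
    then show "tcounit \<epsilon> ps = cou \<epsilon> a" by (simp add: tcR[OF HH GL])
  qed
  have A2: "\<forall>a ps. lcomb \<chi> ps = ltr \<chi> a x \<longrightarrow>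
        (\<forall>c d. lcoprod \<Delta> \<chi> ps c d =
            sw2 (cop \<Delta> a) (\<lambda>i j. tens (ltr \<chi> (bvec i) x (bvec c)) (ltr \<chi> (bvec j) x (bvec d)))) \<and>
        tcounit \<epsilon> ps = cou \<epsilon> a"
  proof (intro allI impI conjI)
    fix a ps c d assume h: "lcomb \<chi> ps = ltr \<chi> a x"
    show "lcoprod \<Delta> \<chi> ps c d =
            sw2 (cop \<Delta> a) (\<lambda>i j. tens (ltr \<chi> (bvec i) x (bvec c)) (ltr \<chi> (bvec j) x (bvec d)))"
      by (rule coprodL[OF HH GL h])
    have "a = Al \<chi> x ps" using h lcomb_eq[OF HH GL] injL[OF HH GL] by (metis injD)
    then show "tcounit \<epsilon> ps = cou \<epsilon> a" by (simp add: tcL[OF HH GL])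
  qed
  have A3: "\<forall>a b. rtr \<chi> x (br \<chi> x a b) = rtr \<chi> a b"
    by (auto simp: rtr_def K0g[OF HH GL])
  have A4: "\<forall>a b. rtr \<chi> x (br \<chi> a x b) = rtr \<chi> x b \<circ> rtr \<chi> x a"
    by (auto simp: rtr_def V_assoc[OF HH])
  have A5: "rtr \<chi> x x = id" by (auto simp: rtr_def D1[OF HH GL])
  have A6: "\<forall>a b. ltr \<chi> (br \<chi> a x b) x = ltr \<chi> a x \<circ> ltr \<chi> b x"
    by (auto simp: ltr_def V_assoc[OF HH])
  have A7: "ltr \<chi> x x = id" by (auto simp: ltr_def D2[OF HH GL])
  have cR: "\<forall>f\<in>TnR \<chi>. (\<lambda>f. rtr \<chi> x (br \<chi> x (f x) x)) f \<in> TnR \<chi>"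
    using rangeR[OF HH GL] by auto
  have cL: "\<forall>f\<in>TnL \<chi>. (\<lambda>f. ltr \<chi> (br \<chi> x (f x) x) x) f \<in> TnL \<chi>"
    using rangeL[OF HH GL] by auto
  show ?thesis
    apply (intro conjI)
    apply (rule injR[OF HH GL])
    apply (rule rangeR[OF HH GL])
    apply (rule A3)
    apply (rule A4)
    apply (rule A5)
    apply (rule A1)
    apply (rule injL[OF HH GL])
    apply (rule rangeL[OF HH GL])
    apply (rule A6)
    apply (rule A7)
    apply (rule A2)
    apply (rule exI[of _ "\<lambda>f. rtr \<chi> x (br \<chi> x (f x) x)"])
    apply (intro conjI allI)
    apply (rule cR)
    apply (rule linR[OF HH GL])
    apply (rule SR1[OF HH GL])
    apply (rule SR2[OF HH GL])
    apply (rule exI[of _ "\<lambda>f. ltr \<chi> (br \<chi> x (f x) x) x"])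
    apply (intro conjI allI)
    apply (rule cL)
    apply (rule linL[OF HH GL])
    apply (rule SL1[OF HH GL])
    apply (rule SL2[OF HH GL])
    done
qed

end
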